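(* For an integer $l\ge1$ and a variable $x$, put $X=x+\frac1x$ and $X^{(l)}=x^l+\frac1{x^l}$. Then $$X^{(l)}=\sum_{j=0}^{\lfloor l/2\rfloor}(-1)^j\dim\mathcal{H}^j(\mathbb{R}^{l+2-2j})\,X^{l-2j}.$$
   Context: $\mathcal{H}^j(\mathbb{R}^d)$ is the space of harmonic homogeneous polynomials of degree $j$ in $d$ real variables (so $\dim\mathcal{H}^0(\mathbb{R}^1)=\dim\mathcal{H}^1(\mathbb{R}^1)=1$ and $\dim\mathcal{H}^j(\mathbb{R}^1)=0$ for $j\ge2$). *)

theory Defs
  imports Complex_Main "HOL-Library.Function_Algebras"
begin

text \<open>Polynomials in d real variables x_0,...,x_{d-1} are represented by their
coefficient functions on exponent vectors (multi-indices) alpha :: nat => nat,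
where alpha i = 0 for i >= d.\<close>

definition multi_idx :: "nat \<Rightarrow> nat \<Rightarrow> (nat \<Rightarrow> nat) set" where
  "multi_idx d j = {\<alpha>. (\<forall>i\<ge>d. \<alpha> i = 0) \<and> (\<Sum>i<d. \<alpha> i) = j}"

definition hom_poly :: "nat \<Rightarrow> nat \<Rightarrow> ((nat \<Rightarrow> nat) \<Rightarrow> real) set" where
  "hom_poly d j = {p. \<forall>\<alpha>. \<alpha> \<notin> multi_idx d j \<longrightarrow> p \<alpha> = 0}"

text \<open>Laplacian: coefficient of x^beta in sum_i d^2 p / d x_i^2.\<close>
definition laplacian :: "nat \<Rightarrow> ((nat \<Rightarrow> nat) \<Rightarrow> real) \<Rightarrow> ((nat \<Rightarrow> nat) \<Rightarrow> real)" where
  "laplacian d p = (\<lambda>\<beta>. \<Sum>i<d. real ((\<beta> i + 2) * (\<beta> i + 1)) * p (\<beta>(i := \<beta> i + 2)))"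

definition harm_hom :: "nat \<Rightarrow> nat \<Rightarrow> ((nat \<Rightarrow> nat) \<Rightarrow> real) set" where
  "harm_hom j d = {p \<in> hom_poly d j. laplacian d p = (\<lambda>_. 0)}"

definition coeff_scale :: "real \<Rightarrow> ((nat \<Rightarrow> nat) \<Rightarrow> real) \<Rightarrow> ((nat \<Rightarrow> nat) \<Rightarrow> real)" where
  "coeff_scale c p = (\<lambda>\<alpha>. c * p \<alpha>)"

definition dimH :: "nat \<Rightarrow> nat \<Rightarrow> nat" where
  "dimH j d = vector_space.dim coeff_scale (harm_hom j d)"

end

theory Submission imports Defs begin

function hh :: "((nat\<Rightarrow>nat)\<Rightarrow>real) \<Rightarrow> nat \<Rightarrow> nat \<Rightarrow> (nat\<Rightarrow>nat) \<Rightarrow> real" where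
"hh g d j \<alpha> = (if \<alpha> \<notin> multi_idx d j then 0 else if \<alpha> 0 \<le> 1 then g \<alpha> else
   - (\<Sum>i\<in>{1..<d}. real ((\<alpha> i + 2) * (\<alpha> i + 1)) * hh g d j ((\<alpha>(0 := \<alpha> 0 - 2))(i := \<alpha> i + 2)))
     / real (\<alpha> 0 * (\<alpha> 0 - 1)))"
  by auto
termination by (relation "measure (\<lambda>(g,d,j,\<alpha>). \<alpha> 0)") auto

declare hh.simps[simp del]

lemma sum_upd: "(i::nat) < d \<Longrightarrow> (\<Sum>k<d. (\<beta>(i:=v)) k) + \<beta> i = (\<Sum>k<d. \<beta> k) + (v::nat)"
proof -
  assume i: "i < d"
  have "(\<Sum>k<d. (\<beta>(i:=v)) k) = (\<beta>(i:=v)) i + (\<Sum>k\<in>{..<d}-{i}. (\<beta>(i:=v)) k)"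
    using i by (subst sum.remove[of _ i]) auto
  also have "(\<Sum>k\<in>{..<d}-{i}. (\<beta>(i:=v)) k) = (\<Sum>k\<in>{..<d}-{i}. \<beta> k)" by (rule sum.cong) auto
  also have "(\<Sum>k<d. \<beta> k) = \<beta> i + (\<Sum>k\<in>{..<d}-{i}. \<beta> k)"
    using i by (subst sum.remove[of _ i]) auto
  ultimately show ?thesis by simp
qed

lemma upd_in: "i < d \<Longrightarrow> i' < d \<Longrightarrow> (\<beta>(i := \<beta> i + 2) \<in> multi_idx d j) = (\<beta>(i' := \<beta> i' + 2) \<in> multi_idx d j)"
proof -
  assume i: "i < d" "i' < d"
  have "(\<Sum>k<d. (\<beta>(i := \<beta> i + 2)) k) = (\<Sum>k<d. \<beta> k) + 2"
    using sum_upd[of i d \<beta> "\<beta> i + 2"] i by simp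
  moreover have "(\<Sum>k<d. (\<beta>(i' := \<beta> i' + 2)) k) = (\<Sum>k<d. \<beta> k) + 2"
    using sum_upd[of i' d \<beta> "\<beta> i' + 2"] i by simp
  ultimately show ?thesis unfolding multi_idx_def using i by auto
qed

lemma sum_split0: "0 < (d::nat) \<Longrightarrow> (\<Sum>i<d. f i) = f 0 + (\<Sum>i\<in>{1..<d}. f i)"
  by (metis One_nat_def atLeast0LessThan sum.atLeast_Suc_lessThan)

lemma harm_unique:
  assumes hp: "p \<in> hom_poly d j" and lp: "laplacian d p = (\<lambda>_. 0)"
    and z: "\<forall>\<alpha>\<in>multi_idx d j. \<alpha> 0 \<le> 1 \<longrightarrow> p \<alpha> = 0"
  shows "p \<alpha> = 0"
proof (induction "\<alpha> 0" arbitrary: \<alpha> rule: less_induct)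
  case less
  show ?case
  proof (cases "\<alpha> \<in> multi_idx d j \<and> \<alpha> 0 > 1")
    case False
    then show ?thesis using hp z unfolding hom_poly_def by (cases "\<alpha> \<in> multi_idx d j") (auto simp: not_less)
  next
    case True
    have d: "0 < d"
    proof (rule ccontr)
      assume "\<not> 0 < d" then have "\<alpha> 0 = 0" using True unfolding multi_idx_def by auto
      then show False using True by simp
    qed
    define \<beta> where "\<beta> = \<alpha>(0 := \<alpha> 0 - 2)"
    have 0: "\<beta>(0 := \<beta> 0 + 2) = \<alpha>" proof (rule ext)
      fix x show "(\<beta>(0 := \<beta> 0 + 2)) x = \<alpha> x" using True unfolding \<beta>_def by (cases "x = 0") auto
    qed
    have "laplacian d p \<beta> = 0" using lp by simp
    then have "real ((\<beta> 0 + 2) * (\<beta> 0 + 1)) * p (\<beta>(0 := \<beta> 0 + 2))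
       + (\<Sum>i\<in>{1..<d}. real ((\<beta> i + 2) * (\<beta> i + 1)) * p (\<beta>(i := \<beta> i + 2))) = 0"
      by (simp only: laplacian_def sum_split0[OF d])
    moreover have "(\<Sum>i\<in>{1..<d}. real ((\<beta> i + 2) * (\<beta> i + 1)) * p (\<beta>(i := \<beta> i + 2))) = 0"
    proof (rule sum.neutral, rule ballI)
      fix i assume i: "i \<in> {1..<d}"
      have "(\<beta>(i := \<beta> i + 2)) 0 < \<alpha> 0" using i True unfolding \<beta>_def by auto
      then have "p (\<beta>(i := \<beta> i + 2)) = 0" using less by blast
      then show "real ((\<beta> i + 2) * (\<beta> i + 1)) * p (\<beta>(i := \<beta> i + 2)) = 0" by simp
    qed
    ultimately have "real ((\<beta> 0 + 2) * (\<beta> 0 + 1)) * p \<alpha> = 0" using 0 by simp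
    then have "real ((\<beta> 0 + 2) * (\<beta> 0 + 1)) = 0 \<or> p \<alpha> = 0" by (simp only: mult_eq_0_iff)
    moreover have "real ((\<beta> 0 + 2) * (\<beta> 0 + 1)) \<noteq> 0" by (simp only: of_nat_eq_0_iff mult_eq_0_iff) simp
    ultimately show ?thesis by blast
  qed
qed

lemma hh_hom: "hh g d j \<in> hom_poly d j"
  unfolding hom_poly_def mem_Collect_eq by (intro allI impI, subst hh.simps, simp)

lemma hh_base: "\<alpha> \<in> multi_idx d j \<Longrightarrow> \<alpha> 0 \<le> 1 \<Longrightarrow> hh g d j \<alpha> = g \<alpha>"
  by (subst hh.simps) simp

lemma hh_rec: "\<alpha> \<in> multi_idx d j \<Longrightarrow> 1 < \<alpha> 0 \<Longrightarrow> hh g d j \<alpha> = - (\<Sum>i\<in>{1..<d}. real ((\<alpha> i + 2) * (\<alpha> i + 1)) * hh g d j ((\<alpha>(0 := \<alpha> 0 - 2))(i := \<alpha> i + 2)))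
     / real (\<alpha> 0 * (\<alpha> 0 - 1))"
  by (subst hh.simps) simp

lemma hh_zero: "\<alpha> \<notin> multi_idx d j \<Longrightarrow> hh g d j \<alpha> = 0"
  by (subst hh.simps) simp

lemma aux_div: "h = - S / c' \<Longrightarrow> c' = c \<Longrightarrow> c \<noteq> 0 \<Longrightarrow> c * h + S = (0::real)"
  by simp

lemma hh_harm: "laplacian d (hh g d j) = (\<lambda>_. 0)"
proof
  fix \<beta>
  show "laplacian d (hh g d j) \<beta> = 0"
  proof (cases "d = 0")
    case True then show ?thesis by (simp add: laplacian_def)
  next
    case False
    then have d: "0 < d" by simp
    define \<alpha> where "\<alpha> = \<beta>(0 := \<beta> 0 + 2)"
    show ?thesis
    proof (cases "\<alpha> \<in> multi_idx d j")
      case False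
      have "\<And>i. i < d \<Longrightarrow> hh g d j (\<beta>(i := \<beta> i + 2)) = 0"
      proof -
        fix i assume i: "i < d"
        have "\<beta>(i := \<beta> i + 2) \<notin> multi_idx d j" using False upd_in[OF i d, of \<beta> j] unfolding \<alpha>_def by simp
        then show "hh g d j (\<beta>(i := \<beta> i + 2)) = 0" by (rule hh_zero)
      qed
      then show ?thesis unfolding laplacian_def by simp
    next
      case True
      have a0: "\<alpha> 0 = \<beta> 0 + 2" unfolding \<alpha>_def by simp
      have ab: "\<alpha>(0 := \<alpha> 0 - 2) = \<beta>" unfolding \<alpha>_def by auto
      have ai: "\<And>i. i \<in> {1..<d} \<Longrightarrow> \<alpha> i = \<beta> i" unfolding \<alpha>_def by auto
      have "hh g d j \<alpha> = - (\<Sum>i\<in>{1..<d}. real ((\<beta> i + 2) * (\<beta> i + 1)) * hh g d j (\<beta>(i := \<beta> i + 2)))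
            / real (\<alpha> 0 * (\<alpha> 0 - 1))"
      proof -
        have "hh g d j \<alpha> = - (\<Sum>i\<in>{1..<d}. real ((\<alpha> i + 2) * (\<alpha> i + 1)) * hh g d j ((\<alpha>(0 := \<alpha> 0 - 2))(i := \<alpha> i + 2)))
            / real (\<alpha> 0 * (\<alpha> 0 - 1))" by (rule hh_rec[OF True]) (simp add: a0)
        also have "\<dots> = - (\<Sum>i\<in>{1..<d}. real ((\<beta> i + 2) * (\<beta> i + 1)) * hh g d j (\<beta>(i := \<beta> i + 2)))
            / real (\<alpha> 0 * (\<alpha> 0 - 1))" unfolding ab using ai by (intro arg_cong2[where f="(/)"] arg_cong[where f=uminus] sum.cong refl) auto
        finally show ?thesis .
      qed
      moreover have "real (\<alpha> 0 * (\<alpha> 0 - 1)) = real ((\<beta> 0 + 2) * (\<beta> 0 + 1))" using a0 by simp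
      moreover have "real ((\<beta> 0 + 2) * (\<beta> 0 + 1)) \<noteq> 0" by (simp only: of_nat_eq_0_iff mult_eq_0_iff) simp
      ultimately have "real ((\<beta> 0 + 2) * (\<beta> 0 + 1)) * hh g d j \<alpha>
         + (\<Sum>i\<in>{1..<d}. real ((\<beta> i + 2) * (\<beta> i + 1)) * hh g d j (\<beta>(i := \<beta> i + 2))) = 0"
        by (rule aux_div)
      then show ?thesis unfolding \<alpha>_def by (simp only: laplacian_def sum_split0[OF d])
    qed
  qed
qed


interpretation V: vector_space coeff_scale
  by unfold_locales (auto simp: coeff_scale_def fun_eq_iff algebra_simps)

lemma sum_fun_apply: "finite S \<Longrightarrow> (\<Sum>y\<in>S. f y) x = (\<Sum>y\<in>S. (f y x :: real))"
  by (induction rule: finite_induct) auto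

lemma lap_add: "laplacian d (p + q) = laplacian d p + laplacian d q"
  unfolding laplacian_def by (auto simp: fun_eq_iff algebra_simps sum.distrib)

lemma lap_scale: "laplacian d (coeff_scale c p) = coeff_scale c (laplacian d p)"
  unfolding laplacian_def coeff_scale_def by (auto simp: fun_eq_iff algebra_simps sum_distrib_left)

lemma harm_subspace: "V.subspace (harm_hom j d)"
proof -
  have "0 \<in> harm_hom j d" unfolding harm_hom_def hom_poly_def laplacian_def by (simp add: fun_eq_iff)
  moreover have "x + y \<in> harm_hom j d" if "x \<in> harm_hom j d" "y \<in> harm_hom j d" for x y
    using that unfolding harm_hom_def hom_poly_def by (simp add: lap_add zero_fun_def)
  moreover have "coeff_scale c x \<in> harm_hom j d" if "x \<in> harm_hom j d" for x c
    using that unfolding harm_hom_def hom_poly_def by (simp add: lap_scale) (simp add: coeff_scale_def zero_fun_def)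
  ultimately show ?thesis unfolding V.subspace_def by blast
qed

lemma dim_card:
  assumes fin: "finite A" and A_def: "A = {\<alpha>\<in>multi_idx d j. \<alpha> 0 \<le> 1}"
  shows "dimH j d = card A"
proof -
  define H where "H \<beta> = hh (\<lambda>\<gamma>. if \<gamma> = \<beta> then 1 else 0) d j" for \<beta>
  have Hv: "H \<gamma> \<beta> = (if \<beta> = \<gamma> then 1 else 0)" if "\<beta> \<in> A" for \<beta> \<gamma>
    using that unfolding H_def A_def by (simp add: hh_base)
  have Hh: "H \<gamma> \<in> harm_hom j d" for \<gamma>
    unfolding H_def harm_hom_def using hh_hom hh_harm by blast
  have inj: "inj_on H A"
  proof (rule inj_onI)
    fix x y assume "x \<in> A" "y \<in> A" "H x = H y"
    then have "H x x = H y x" by simp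
    then show "x = y" using Hv[OF \<open>x \<in> A\<close>] by (auto split: if_splits)
  qed
  define B where "B = H ` A"
  have finB: "finite B" unfolding B_def using fin by simp
  have cardB: "card B = card A" unfolding B_def using inj by (simp add: card_image)
  have sub: "B \<subseteq> harm_hom j d" unfolding B_def using Hh by auto
  have ind: "V.independent B"
  proof (rule V.independent_if_scalars_zero[OF finB])
    fix f x assume s: "(\<Sum>x\<in>B. coeff_scale (f x) x) = 0" and x: "x \<in> B"
    then obtain \<beta> where \<beta>: "\<beta> \<in> A" "x = H \<beta>" unfolding B_def by auto
    have "0 = (\<Sum>x\<in>B. coeff_scale (f x) x) \<beta>" using s by simp
    also have "\<dots> = (\<Sum>y\<in>B. f y * y \<beta>)" using finB by (simp add: sum_fun_apply coeff_scale_def)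
    also have "\<dots> = (\<Sum>\<gamma>\<in>A. f (H \<gamma>) * H \<gamma> \<beta>)" unfolding B_def using inj by (simp add: sum.reindex)
    also have "\<dots> = (\<Sum>\<gamma>\<in>A. if \<beta> = \<gamma> then f (H \<gamma>) else 0)" using Hv[OF \<beta>(1)] by (intro sum.cong) auto
    also have "\<dots> = f (H \<beta>)" using fin \<beta>(1) by simp
    finally show "f x = 0" using \<beta> by simp
  qed
  have sp: "harm_hom j d \<subseteq> V.span B"
  proof
    fix p assume p: "p \<in> harm_hom j d"
    define q where "q = (\<Sum>\<gamma>\<in>A. coeff_scale (p \<gamma>) (H \<gamma>))"
    have qs: "q \<in> V.span B" unfolding q_def B_def
      by (intro V.span_sum V.span_scale V.span_base) auto
    have qh: "q \<in> harm_hom j d" unfolding q_def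
      using harm_subspace Hh by (intro V.subspace_sum V.subspace_scale) auto
    have pq: "p - q \<in> harm_hom j d" using harm_subspace p qh by (rule V.subspace_diff)
    have "\<forall>\<beta>\<in>multi_idx d j. \<beta> 0 \<le> 1 \<longrightarrow> (p - q) \<beta> = 0"
    proof (intro ballI impI)
      fix \<beta> assume "\<beta> \<in> multi_idx d j" "\<beta> 0 \<le> 1"
      then have b: "\<beta> \<in> A" unfolding A_def by simp
      have "q \<beta> = (\<Sum>\<gamma>\<in>A. p \<gamma> * H \<gamma> \<beta>)" unfolding q_def using fin by (simp add: sum_fun_apply coeff_scale_def)
      also have "\<dots> = (\<Sum>\<gamma>\<in>A. if \<beta> = \<gamma> then p \<gamma> else 0)" using Hv[OF b] by (intro sum.cong) auto
      also have "\<dots> = p \<beta>" using fin b by simp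
      finally show "(p - q) \<beta> = 0" by simp
    qed
    then have "\<And>\<beta>. (p - q) \<beta> = 0" using pq harm_unique unfolding harm_hom_def by blast
    then have "p = q" by (simp add: fun_eq_iff)
    then show "p \<in> V.span B" using qs by simp
  qed
  have "card B = V.dim (harm_hom j d)" by (rule V.basis_card_eq_dim[OF sub sp ind])
  then show ?thesis unfolding dimH_def using cardB by simp
qed


lemma slice_bij:
  assumes d: "1 \<le> d" and c: "c \<le> j"
  shows "bij_betw (\<lambda>\<alpha>. map \<alpha> [1..<d]) {\<alpha>\<in>multi_idx d j. \<alpha> 0 = c}
           {l::nat list. length l = d - 1 \<and> sum_list l = j - c}"
proof (rule bij_betw_byWitness[where f'="\<lambda>l i. if i = 0 then c else if i < d then l ! (i - 1) else 0"])
  have s1: "(\<Sum>i<d. \<alpha> i) = \<alpha> 0 + sum_list (map \<alpha> [1..<d])" for \<alpha> :: "nat \<Rightarrow> nat"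
    using sum_split0[of d \<alpha>] d by (simp add: sum_set_upt_conv_sum_list_nat[symmetric])
  show "\<forall>a\<in>{\<alpha> \<in> multi_idx d j. \<alpha> 0 = c}.
       (\<lambda>i. if i = 0 then c else if i < d then map a [1..<d] ! (i - 1) else 0) = a"
  proof (intro ballI ext)
    fix a i assume a: "a \<in> {\<alpha> \<in> multi_idx d j. \<alpha> 0 = c}"
    show "(if i = 0 then c else if i < d then map a [1..<d] ! (i - 1) else 0) = a i"
      using a by (auto simp: multi_idx_def nth_map_upt)
  qed
  show "\<forall>l\<in>{l. length l = d - 1 \<and> sum_list l = j - c}.
       map (\<lambda>i. if i = 0 then c else if i < d then l ! (i - 1) else 0) [1..<d] = l"
  proof (intro ballI)
    fix l :: "nat list" assume l: "l \<in> {l. length l = d - 1 \<and> sum_list l = j - c}"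
    show "map (\<lambda>i. if i = 0 then c else if i < d then l ! (i - 1) else 0) [1..<d] = l"
      using l d by (intro nth_equalityI) (auto simp: nth_map_upt)
  qed
  show "(\<lambda>\<alpha>. map \<alpha> [1..<d]) ` {\<alpha> \<in> multi_idx d j. \<alpha> 0 = c} \<subseteq> {l. length l = d - 1 \<and> sum_list l = j - c}"
    using s1 by (auto simp: multi_idx_def)
  show "(\<lambda>l i. if i = 0 then c else if i < d then l ! (i - 1) else 0) ` {l. length l = d - 1 \<and> sum_list l = j - c}
    \<subseteq> {\<alpha> \<in> multi_idx d j. \<alpha> 0 = c}"
  proof
    fix \<alpha> assume "\<alpha> \<in> (\<lambda>l i. if i = 0 then c else if i < d then l ! (i - 1) else 0) ` {l. length l = d - 1 \<and> sum_list l = j - c}"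
    then obtain l where l: "length l = d - 1" "sum_list l = j - c"
      and a: "\<alpha> = (\<lambda>i. if i = 0 then c else if i < d then l ! (i - 1) else 0)" by auto
    have m: "map \<alpha> [1..<d] = l" using l d a by (intro nth_equalityI) (auto simp: nth_map_upt)
    have "(\<Sum>i<d. \<alpha> i) = j" using s1[of \<alpha>] m l c a by simp
    then show "\<alpha> \<in> {\<alpha> \<in> multi_idx d j. \<alpha> 0 = c}" using a d by (auto simp: multi_idx_def)
  qed
qed

lemma card_slice:
  assumes d: "1 \<le> d" and c: "c \<le> j"
  shows "card {\<alpha>\<in>multi_idx d j. \<alpha> 0 = c} = (j - c + (d - 1) - 1) choose (j - c)"
  using bij_betw_same_card[OF slice_bij[OF d c]] card_length_sum_list by simp


lemma dimH_formula:
  assumes d: "2 \<le> d"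
  shows "dimH j d = (j + d - 2 choose j) + (if j = 0 then 0 else (j - 1 + d - 2) choose (j - 1))"
proof -
  define A where "A = {\<alpha>\<in>multi_idx d j. \<alpha> 0 \<le> 1}"
  define A0 where "A0 = {\<alpha>\<in>multi_idx d j. \<alpha> 0 = 0}"
  define A1 where "A1 = {\<alpha>\<in>multi_idx d j. \<alpha> 0 = 1}"
  have AU: "A = A0 \<union> A1" unfolding A_def A0_def A1_def by auto
  have dis: "A0 \<inter> A1 = {}" unfolding A0_def A1_def by auto
  have c0: "card A0 = (j + d - 2 choose j)"
    unfolding A0_def using card_slice[of d 0 j] d by (simp add: numeral_2_eq_2)
  have f0: "finite A0"
  proof (rule card_ge_0_finite)
    show "0 < card A0" unfolding c0 using d by simp
  qed
  have "card A1 = (if j = 0 then 0 else (j - 1 + d - 2) choose (j - 1)) \<and> finite A1"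
  proof (cases "j = 0")
    case True
    have "A1 = {}"
    proof (rule ccontr)
      assume "A1 \<noteq> {}"
      then obtain \<alpha> where a: "\<alpha> \<in> multi_idx d j" "\<alpha> 0 = 1" unfolding A1_def by auto
      have "\<alpha> 0 \<le> (\<Sum>i<d. \<alpha> i)" using d by (intro member_le_sum) auto
      then show False using a True unfolding multi_idx_def by auto
    qed
    then show ?thesis using True by simp
  next
    case False
    have c1: "card A1 = (j - 1 + d - 2) choose (j - 1)"
      unfolding A1_def using card_slice[of d 1 j] d False by (simp add: numeral_2_eq_2)
    moreover have "finite A1"
    proof (rule card_ge_0_finite)
      show "0 < card A1" unfolding c1 using d by simp
    qed
    ultimately show ?thesis using False by simp
  qed
  then have c1: "card A1 = (if j = 0 then 0 else (j - 1 + d - 2) choose (j - 1))" and f1: "finite A1" by auto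
  have "card A = card A0 + card A1" unfolding AU using f0 f1 dis by (rule card_Un_disjoint)
  moreover have "dimH j d = card A" using f0 f1 AU by (intro dim_card[OF _ A_def]) simp
  ultimately show ?thesis using c0 c1 by simp
qed

definition cc :: "nat \<Rightarrow> nat \<Rightarrow> nat" where
  "cc l j = (if 2 * j \<le> l then ((l - j) choose j) + (if j = 0 then 0 else ((l - j - 1) choose (j - 1))) else 0)"

lemma dimH_cc:
  assumes "1 \<le> l" "j \<le> l div 2"
  shows "dimH j (l + 2 - 2 * j) = cc l j"
proof -
  have "2 * j \<le> l" using assms by auto
  moreover have "j + (l + 2 - 2 * j) - 2 = l - j" using \<open>2 * j \<le> l\<close> by simp
  moreover have "j \<noteq> 0 \<Longrightarrow> j - 1 + (l + 2 - 2 * j) - 2 = l - j - 1" using \<open>2 * j \<le> l\<close> by simp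
  ultimately show ?thesis using dimH_formula[of "l + 2 - 2 * j" j] unfolding cc_def by auto
qed

lemma cc_rec:
  assumes l: "1 \<le> l" and i: "2 * i \<le> l"
  shows "cc (l + 2) (i + 1) = cc (l + 1) (i + 1) + cc l i"
proof (cases "2 * i + 2 \<le> l + 1")
  case True
  have a: "cc (l + 2) (i + 1) = (l + 1 - i choose (i + 1)) + (l - i choose i)"
    using True unfolding cc_def by simp
  have b: "cc (l + 1) (i + 1) = (l - i choose (i + 1)) + (l - i - 1 choose i)"
    using True unfolding cc_def by simp
  have c: "cc l i = (l - i choose i) + (if i = 0 then 0 else (l - i - 1) choose (i - 1))"
    using True unfolding cc_def by simp
  have p1: "(l + 1 - i choose (i + 1)) = (l - i choose i) + (l - i choose (i + 1))"
    
  proof -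
    have "l + 1 - i = Suc (l - i)" using True by simp
    then show ?thesis by (simp only: binomial_Suc_Suc Suc_eq_plus1[symmetric])
  qed
  have p2: "(l - i choose i) = (l - i - 1 choose i) + (if i = 0 then 0 else (l - i - 1) choose (i - 1))"
  proof (cases i)
    case 0 then show ?thesis by simp
  next
    case (Suc k)
    have "l - i = Suc (l - i - 1)" using True by simp
    define m where "m = l - i - 1"
    have "(l - i choose i) = (Suc m choose Suc k)" using \<open>l - i = Suc (l - i - 1)\<close> Suc m_def by simp
    also have "\<dots> = (m choose k) + (m choose Suc k)" by (rule binomial_Suc_Suc)
    finally show ?thesis using Suc m_def by simp
  qed
  show ?thesis using a b c p1 p2 by simp
next
  case False
  then have li: "l = 2 * i" using i by simp
  then have i0: "i \<noteq> 0" using l by auto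
  have "cc (l + 2) (i + 1) = 2" using li unfolding cc_def by simp
  moreover have "cc (l + 1) (i + 1) = 0" using False unfolding cc_def by simp
  moreover have "cc l i = 2" using li i0 unfolding cc_def by simp
  ultimately show ?thesis by simp
qed


definition ff :: "'a::field \<Rightarrow> nat \<Rightarrow> nat \<Rightarrow> 'a" where
  "ff X l j = (-1) ^ j * of_nat (cc l j) * X ^ (l - 2 * j)"

lemma cc_zero: "l < 2 * j \<Longrightarrow> cc l j = 0" unfolding cc_def by simp

lemma ff_ext: "l \<le> N \<Longrightarrow> (\<Sum>j\<le>N. ff X l j) = (\<Sum>j\<le>l. ff X l j)"
  by (rule sum.mono_neutral_right) (auto simp: ff_def cc_zero)

lemma alg:
  fixes X a b c Y Z :: "'a::field"
  assumes h: "X * (a * Z) = a * Y" and c: "c = a + b"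
  shows "(-1) ^ Suc i * c * Y = X * ((-1) ^ Suc i * a * Z) - (-1) ^ i * b * Y"
proof -
  have "X * ((-1) ^ Suc i * a * Z) = (-1) ^ Suc i * (X * (a * Z))" by (simp only: ac_simps)
  also have "\<dots> = (-1) ^ Suc i * (a * Y)" by (simp only: h)
  finally have e: "X * ((-1) ^ Suc i * a * Z) = (-1) ^ Suc i * (a * Y)" .
  show ?thesis unfolding c e by (simp add: algebra_simps)
qed

lemma ff_step:
  assumes l: "1 \<le> l"
  shows "ff X (l + 2) (Suc i) = X * ff X (l + 1) (Suc i) - ff X l i"
proof (cases "2 * i \<le> l")
  case False
  then show ?thesis by (simp add: ff_def cc_zero)
next
  case True
  have r: "cc (l + 2) (i + 1) = cc (l + 1) (i + 1) + cc l i" by (rule cc_rec[OF l True])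
  have e1: "l + 2 - 2 * Suc i = l - 2 * i" by simp
  have e2: "X * (of_nat (cc (l + 1) (i + 1)) * X ^ (l + 1 - 2 * Suc i)) = of_nat (cc (l + 1) (i + 1)) * X ^ (l - 2 * i)"
  proof (cases "2 * i + 2 \<le> l + 1")
    case True
    then have "l - 2 * i = Suc (l + 1 - 2 * Suc i)" by simp
    then have p: "X ^ (l - 2 * i) = X * X ^ (l + 1 - 2 * Suc i)" by (metis power_Suc)
    then show ?thesis by (metis mult.left_commute)
  next
    case False
    then show ?thesis by (simp add: cc_zero)
  qed
  have r': "of_nat (cc (l + 2) (Suc i)) = (of_nat (cc (l + 1) (Suc i)) + of_nat (cc l i) :: 'a)"
    using r by simp
  have e2': "X * (of_nat (cc (l + 1) (Suc i)) * X ^ (l + 1 - 2 * Suc i)) = of_nat (cc (l + 1) (Suc i)) * X ^ (l - 2 * i)"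
    using e2 by simp
  show ?thesis unfolding ff_def e1 by (rule alg[OF e2' r'])
qed

lemma Q_step:
  assumes l: "1 \<le> l"
  shows "(\<Sum>j\<le>l + 2. ff X (l + 2) j) = X * (\<Sum>j\<le>l + 1. ff X (l + 1) j) - (\<Sum>j\<le>l. ff X l j)"
proof -
  have "(\<Sum>j\<le>l + 2. ff X (l + 2) j) = ff X (l + 2) 0 + (\<Sum>i\<le>l + 1. ff X (l + 2) (Suc i))"
    by (simp add: sum.atMost_Suc_shift del: sum.atMost_Suc)
  also have "\<dots> = X * ff X (l + 1) 0 + (\<Sum>i\<le>l + 1. X * ff X (l + 1) (Suc i) - ff X l i)"
  proof -
    have "ff X (l + 2) 0 = X * ff X (l + 1) 0" by (simp add: ff_def cc_def)
    moreover have "(\<Sum>i\<le>l + 1. ff X (l + 2) (Suc i)) = (\<Sum>i\<le>l + 1. X * ff X (l + 1) (Suc i) - ff X l i)"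
      by (rule sum.cong[OF refl]) (rule ff_step[OF l])
    ultimately show ?thesis by simp
  qed
  also have "\<dots> = X * (ff X (l + 1) 0 + (\<Sum>i\<le>l + 1. ff X (l + 1) (Suc i))) - (\<Sum>i\<le>l + 1. ff X l i)"
    by (simp add: sum_subtractf sum_distrib_left algebra_simps)
  also have "ff X (l + 1) 0 + (\<Sum>i\<le>l + 1. ff X (l + 1) (Suc i)) = (\<Sum>j\<le>l + 2. ff X (l + 1) j)"
    by (simp add: sum.atMost_Suc_shift del: sum.atMost_Suc)
  also have "\<dots> = (\<Sum>j\<le>l + 1. ff X (l + 1) j)" by (rule ff_ext) simp
  also have "(\<Sum>i\<le>l + 1. ff X l i) = (\<Sum>j\<le>l. ff X l j)" by (rule ff_ext) simp
  finally show ?thesis .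
qed

lemma Q_closed:
  fixes x :: "'a::field"
  assumes x: "x \<noteq> 0"
  shows "1 \<le> l \<Longrightarrow> (\<Sum>j\<le>l. ff (x + 1 / x) l j) = x ^ l + 1 / x ^ l"
proof (induction l rule: less_induct)
  case (less l)
  show ?case
  proof (cases "l \<le> 2")
    case True
    then have "l = 1 \<or> l = 2" using less.prems by auto
    then show ?thesis
    proof
      assume "l = 1"
      then show ?thesis by (simp add: ff_def cc_def)
    next
      assume l2: "l = 2"
      have "(\<Sum>j\<le>l. ff (x + 1 / x) l j) = (x + 1 / x)^2 - 2"
        unfolding l2 by (simp add: ff_def cc_def numeral_2_eq_2)
      also have "\<dots> = x ^ l + 1 / x ^ l" unfolding l2 using x by (simp add: field_simps power2_eq_square)
      finally show ?thesis .
    qed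
  next
    case False
    then obtain m where m: "l = m + 2" "1 \<le> m" by (metis add.commute le_add1 less_imp_Suc_add not_le numeral_2_eq_2 add_2_eq_Suc' le_add2 plus_1_eq_Suc Suc_le_mono le_iff_add)
    have "(\<Sum>j\<le>l. ff (x + 1 / x) l j) = (x + 1/x) * (x ^ (m+1) + 1 / x ^ (m+1)) - (x ^ m + 1 / x ^ m)"
    proof -
      have i1: "(\<Sum>j\<le>m + 1. ff (x + 1 / x) (m + 1) j) = x ^ (m+1) + 1 / x ^ (m+1)"
        by (rule less.IH) (use m in auto)
      have i2: "(\<Sum>j\<le>m. ff (x + 1 / x) m j) = x ^ m + 1 / x ^ m"
        by (rule less.IH) (use m in auto)
      show ?thesis unfolding m(1) Q_step[OF m(2)] i1 i2 ..
    qed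
    also have "\<dots> = x ^ l + 1 / x ^ l" unfolding m(1) using x by (simp add: field_simps)
    finally show ?thesis .
  qed
qed

theorem lemma3p4:
  fixes x :: "'a::field" and l :: nat
  assumes "l \<ge> 1" and "x \<noteq> 0"
  shows "x ^ l + 1 / x ^ l =
    (\<Sum>j\<le>l div 2. (-1) ^ j * of_nat (dimH j (l + 2 - 2 * j)) * (x + 1 / x) ^ (l - 2 * j))"
proof -
  have "(\<Sum>j\<le>l div 2. (-1) ^ j * of_nat (dimH j (l + 2 - 2 * j)) * (x + 1 / x) ^ (l - 2 * j))
      = (\<Sum>j\<le>l div 2. ff (x + 1 / x) l j)"
    using dimH_cc[OF assms(1)] by (intro sum.cong) (auto simp: ff_def)
  also have "\<dots> = (\<Sum>j\<le>l. ff (x + 1 / x) l j)"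
    by (rule sum.mono_neutral_left) (auto simp: ff_def cc_zero)
  also have "\<dots> = x ^ l + 1 / x ^ l" by (rule Q_closed[OF assms(2) assms(1)])
  finally show ?thesis by simp
qed

end
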